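(* Let $\mathbb{K}\in\{\mathbb{R},\mathbb{C}\}$, $\star\in\{*,T\}$, $\epsilon_1,\epsilon_2\in\{1,-1\}$, and let $Q(\lambda)=\lambda^2M+\lambda D+K\in\mathbb{K}^{n\times n}[\lambda]$ satisfy $M^\star=\epsilon_1M$, $D^\star=\epsilon_2D$, $K^\star=\epsilon_1K$. Suppose $(X_c,\Lambda_c)\in\mathbb{K}^{n\times p_1}\times\mathbb{K}^{p_1\times p_1}$ and $(X_f,\Lambda_f)\in\mathbb{K}^{n\times p_2}\times\mathbb{K}^{p_2\times p_2}$ are invariant pairs of $Q(\lambda)$. Let $\Lambda_a\in\mathbb{K}^{p_1\times p_1}$ and put $S=X_c^\star MX_c\Lambda_c+\epsilon_1\epsilon_2\Lambda_c^\star X_c^\star MX_c+X_c^\star DX_c$. Assume that (1) $\sigma(\Lambda_c)\cap\sigma(\epsilon_1\epsilon_2\Lambda_f^\star)=\emptyset$, and (2) $R:=X_c^\star MX_c\Lambda_a+\epsilon_1\epsilon_2\Lambda_c^\star X_c^\star MX_c+X_c^\star DX_c$ is nonsingular. Let $Z=(\Lambda_c-\Lambda_a)R^{-1}$ and $\triangle M=MX_cZX_c^\star M$, $\triangle D=\epsilon_1\epsilon_2MX_cZ\Lambda_c^\star X_c^\star M+MX_cZX_c^\star D+MX_c\Lambda_cZX_c^\star M+DX_cZX_c^\star M$, $\triangle K=\epsilon_1\epsilon_2MX_c\Lambda_cZ\Lambda_c^\star X_c^\star M+MX_c\Lambda_cZX_c^\star D+\epsilon_1\epsilon_2DX_cZ\Lambda_c^\star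 X_c^\star M+DX_cZX_c^\star D$. Then $(X_c,\Lambda_a)$ and $(X_f,\Lambda_f)$ are invariant pairs of $Q_\triangle(\lambda)=\lambda^2(M+\triangle M)+\lambda(D+\triangle D)+(K+\triangle K)\in\mathbb{K}^{n\times n}[\lambda]$. Moreover, if $S\Lambda_a=\epsilon_1(S\Lambda_a)^\star$, then $(M+\triangle M)^\star=\epsilon_1(M+\triangle M)$, $(D+\triangle D)^\star=\epsilon_2(D+\triangle D)$ and $(K+\triangle K)^\star=\epsilon_1(K+\triangle K)$.
   Context: For a matrix $A$, $A^*$ is the conjugate transpose and $A^T$ the transpose; $A^\star$ means $A^*$ if $\star=*$ and $A^T$ if $\star=T$. $\sigma(A)$ is the spectrum of a square matrix $A$. A pair $(X,\Lambda)\in\mathbb{K}^{n\times p}\times\mathbb{K}^{p\times p}$ is an invariant pair of $Q(\lambda)=\lambda^2M+\lambda D+K$ if $Q(X,\Lambda):=MX\Lambda^2+DX\Lambda+KX=0$. *)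

theory Defs
  imports "Jordan_Normal_Form.Spectral_Radius" "Jordan_Normal_Form.Schur_Decomposition"
          "Jordan_Normal_Form.Gauss_Jordan_Elimination"
begin

definition quad_eval :: "complex mat \<Rightarrow> complex mat \<Rightarrow> complex mat \<Rightarrow> complex mat \<Rightarrow> complex mat \<Rightarrow> complex mat" where
  "quad_eval M D K X L = M * X * (L * L) + D * X * L + K * X"

definition invariant_pair :: "complex mat \<Rightarrow> complex mat \<Rightarrow> complex mat \<Rightarrow> complex mat \<Rightarrow> complex mat \<Rightarrow> bool" where
  "invariant_pair M D K X L \<longleftrightarrow> quad_eval M D K X L = 0\<^sub>m (dim_row X) (dim_col L)"

definition mat_over :: "complex set \<Rightarrow> complex mat \<Rightarrow> bool" where
  "mat_over S A \<longleftrightarrow> (\<forall>i j. i < dim_row A \<longrightarrow> j < dim_col A \<longrightarrow> A $$ (i, j) \<in> S)"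

end

theory Submission
  imports Defs
begin

lemma adj_alt: "mat_adjoint (A :: complex mat) = mat (dim_col A) (dim_row A) (\<lambda>(i,j). cnj (A $$ (j,i)))"
  unfolding mat_adjoint_def mat_of_rows_def
  by (rule eq_matI) (auto simp: cols_def)

lemma adj_dims[simp]: "dim_row (mat_adjoint (A::complex mat)) = dim_col A"
  "dim_col (mat_adjoint (A::complex mat)) = dim_row A"
  by (auto simp: adj_alt)

lemma adj_index[simp]: "i < dim_col A \<Longrightarrow> j < dim_row A \<Longrightarrow> mat_adjoint (A::complex mat) $$ (i,j) = cnj (A $$ (j,i))"
  by (auto simp: adj_alt)

lemma adj_mult: "dim_col (A::complex mat) = dim_row B \<Longrightarrow> mat_adjoint (A * B) = mat_adjoint B * mat_adjoint A"
  by (rule eq_matI) (auto simp: scalar_prod_def mult.commute)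

lemma adj_add: "dim_row (A::complex mat) = dim_row B \<Longrightarrow> dim_col A = dim_col B \<Longrightarrow> mat_adjoint (A + B) = mat_adjoint A + mat_adjoint B"
  by (rule eq_matI) auto

lemma adj_smult: "cnj c = c \<Longrightarrow> mat_adjoint (c \<cdot>\<^sub>m (A::complex mat)) = c \<cdot>\<^sub>m mat_adjoint A"
  by (rule eq_matI) auto

lemma adj_adj: "mat_adjoint (mat_adjoint (A::complex mat)) = A"
  by (rule eq_matI) auto

lemma adj_one: "mat_adjoint (1\<^sub>m n :: complex mat) = 1\<^sub>m n"
  by (rule eq_matI) auto


lemma massoc: "dim_col A = dim_row B \<Longrightarrow> dim_col B = dim_row C \<Longrightarrow> A * B * C = A * (B * C)"
  by (rule assoc_mult_mat[of A "dim_row A" "dim_col A" B "dim_col B" C "dim_col C"]) auto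

lemma diag_in_spectrum:
  fixes B :: "complex mat"
  assumes B: "B \<in> carrier_mat q q" and T: "T \<in> carrier_mat q q" and ut: "upper_triangular T"
    and sim: "similar_mat B T" and j: "j < q"
  shows "T $$ (j,j) \<in> spectrum B"
proof -
  have "spectrum B = {k. poly (char_poly T) k = 0}"
    using spectrum_root_char_poly[OF B] char_poly_similar[OF sim] by simp
  moreover have "char_poly T = (\<Prod> a \<leftarrow> diag_mat T. [:- a, 1:])"
    by (rule char_poly_upper_triangular[OF T ut])
  moreover have "T $$ (j,j) \<in> set (diag_mat T)" using j T by (auto simp: diag_mat_def)
  ultimately show ?thesis by (auto simp: poly_prod_list prod_list_zero_iff)
qed

lemma sylvester_zero:
  fixes A B X :: "complex mat"
  assumes A: "A \<in> carrier_mat p p" and B: "B \<in> carrier_mat q q" and X: "X \<in> carrier_mat p q"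
    and eq: "A * X = X * B" and disj: "spectrum A \<inter> spectrum B = {}"
  shows "X = 0\<^sub>m p q"
proof -
  obtain es where "char_poly B = (\<Prod> a \<leftarrow> es. [:- a, 1:])"
    using char_poly_factorized[OF B] by blast
  from schur_upper_triangular[OF B this]
  obtain T where T: "T \<in> carrier_mat q q" "upper_triangular T" "similar_mat B T" by blast
  from similar_matD[OF T(3)] obtain m P Q where PQ: "{B,T,P,Q} \<subseteq> carrier_mat m m"
    "P * Q = 1\<^sub>m m" "Q * P = 1\<^sub>m m" "B = P * T * Q" by blast
  have mq: "m = q" using PQ(1) B by auto
  have P: "P \<in> carrier_mat q q" and Q: "Q \<in> carrier_mat q q" using PQ(1) mq by auto
  define Y where "Y = X * P"
  have Y: "Y \<in> carrier_mat p q" using X P by (simp add: Y_def)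
  have AY: "A * Y = Y * T"
  proof -
    have "A * Y = A * X * P" using A X P by (simp add: Y_def assoc_mult_mat[OF A X P])
    also have "\<dots> = X * B * P" using eq by simp
    also have "\<dots> = X * P * T * (Q * P)" using X P Q T PQ(4)
      by (simp add: massoc)
    also have "\<dots> = Y * T" using PQ(3) mq X P T by (simp add: Y_def)
    finally show ?thesis .
  qed
  have col0: "\<forall>r<p. Y $$ (r,j) = 0" if "j < q" for j
    using that
  proof (induction j rule: less_induct)
    case (less j)
    have ent: "(A * Y) $$ (r,j) = T $$ (j,j) * Y $$ (r,j)" if r: "r < p" for r
    proof -
      have "(A * Y) $$ (r,j) = (\<Sum>k<q. Y $$ (r,k) * T $$ (k,j))"
        unfolding AY using r less.prems Y T by (simp add: scalar_prod_def lessThan_atLeast0)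
      also have "\<dots> = (\<Sum>k\<in>{j}. Y $$ (r,k) * T $$ (k,j))"
      proof (rule sum.mono_neutral_right)
        show "\<forall>k\<in>{..<q} - {j}. Y $$ (r, k) * T $$ (k, j) = 0"
        proof
          fix k assume k: "k \<in> {..<q} - {j}"
          show "Y $$ (r, k) * T $$ (k, j) = 0"
          proof (cases "k < j")
            case True then show ?thesis using less.IH[of k] less.prems r by auto
          next
            case False then have "j < k" using k by auto
            then have "T $$ (k,j) = 0" using T k unfolding upper_triangular_def by auto
            then show ?thesis by simp
          qed
        qed
      qed (use less.prems in auto)
      finally show ?thesis by simp
    qed
    define v where "v = col Y j"
    have v: "v \<in> carrier_vec p" unfolding v_def using Y by (metis carrier_matD(1) carrier_vecI dim_col)
    have "A *\<^sub>v v = T $$ (j,j) \<cdot>\<^sub>v v"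
    proof (rule eq_vecI)
      fix r assume "r < dim_vec (T $$ (j,j) \<cdot>\<^sub>v v)"
      then have r: "r < p" using v by auto
      have "(A *\<^sub>v v) $ r = (A * Y) $$ (r,j)" unfolding v_def using A Y r less.prems by simp
      then show "(A *\<^sub>v v) $ r = (T $$ (j,j) \<cdot>\<^sub>v v) $ r"
        using ent[OF r] r Y less.prems unfolding v_def by simp
    qed (use A v in auto)
    moreover have "T $$ (j,j) \<notin> spectrum A"
      using diag_in_spectrum[OF B T less.prems] disj by auto
    ultimately have "v = 0\<^sub>v p"
      using A v unfolding spectrum_def eigenvalue_def eigenvector_def by auto
    show ?case
    proof (intro allI impI)
      fix r assume r: "r < p"
      have "Y $$ (r,j) = v $ r" unfolding v_def using Y r less.prems by simp
      then show "Y $$ (r,j) = 0" using \<open>v = 0\<^sub>v p\<close> r by simp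
    qed
  qed
  have Y0: "Y = 0\<^sub>m p q" using Y col0 by (intro eq_matI) auto
  have "X = X * (P * Q)" using X PQ(2) mq by simp
  also have "\<dots> = Y * Q" using X P Q by (simp add: Y_def)
  also have "\<dots> = 0\<^sub>m p q" using Y0 Q by simp
  finally show ?thesis .
qed


lemma mdistl: "dim_col A = dim_row B \<Longrightarrow> dim_row B = dim_row C \<Longrightarrow> dim_col B = dim_col C \<Longrightarrow> A * (B + C) = A * B + A * C"
  by (rule mult_add_distrib_mat[of A "dim_row A" "dim_col A" B "dim_col B" C]) auto

lemma mdistr: "dim_row A = dim_row B \<Longrightarrow> dim_col A = dim_col B \<Longrightarrow> dim_col A = dim_row C \<Longrightarrow> (A + B) * C = A * C + B * C"
  by (rule add_mult_distrib_mat[of A "dim_row A" "dim_col A" B C "dim_col C"]) auto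

lemma msmultl: "dim_col A = dim_row B \<Longrightarrow> (c \<cdot>\<^sub>m A) * B = (c::complex) \<cdot>\<^sub>m (A * B)"
  by (rule mult_smult_assoc_mat[of A "dim_row A" "dim_col A" B "dim_col B"]) auto

lemma msmultr: "dim_col A = dim_row B \<Longrightarrow> A * (c \<cdot>\<^sub>m B) = (c::complex) \<cdot>\<^sub>m (A * B)"
  by (rule mult_smult_distrib[of A "dim_row A" "dim_col A" B "dim_col B"]) auto

lemma ssmult: "(a::complex) \<cdot>\<^sub>m (b \<cdot>\<^sub>m A) = (a * b) \<cdot>\<^sub>m A"
  by (rule eq_matI) auto

lemma onesmult: "(1::complex) \<cdot>\<^sub>m A = A"
  by (rule eq_matI) auto

lemma sadd: "dim_row A = dim_row B \<Longrightarrow> dim_col A = dim_col B \<Longrightarrow> (c::complex) \<cdot>\<^sub>m (A + B) = c \<cdot>\<^sub>m A + c \<cdot>\<^sub>m B"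
  by (rule eq_matI) (auto simp: algebra_simps)

lemma addA: "dim_row A = dim_row B \<Longrightarrow> dim_col A = dim_col B \<Longrightarrow> dim_row B = dim_row C \<Longrightarrow> dim_col B = dim_col C \<Longrightarrow> A + B + C = A + (B + (C :: complex mat))"
  by (rule eq_matI) (auto simp: algebra_simps)

lemma addC: "dim_row A = dim_row B \<Longrightarrow> dim_col A = dim_col B \<Longrightarrow> A + B = B + (A :: complex mat)"
  by (rule eq_matI) (auto simp: algebra_simps)

lemma addLC: "dim_row A = dim_row B \<Longrightarrow> dim_col A = dim_col B \<Longrightarrow> dim_row B = dim_row C \<Longrightarrow> dim_col B = dim_col C \<Longrightarrow> A + (B + C) = B + (A + (C :: complex mat))"
  by (rule eq_matI) (auto simp: algebra_simps)

lemma add_rcancel: "A + C = B + C \<Longrightarrow> dim_row A = dim_row C \<Longrightarrow> dim_col A = dim_col C \<Longrightarrow> dim_row B = dim_row C \<Longrightarrow> dim_col B = dim_col C \<Longrightarrow> A = (B :: complex mat)"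
proof (rule eq_matI)
  fix i j assume h: "A + C = B + C" "dim_row A = dim_row C" "dim_col A = dim_col C" "dim_row B = dim_row C" "dim_col B = dim_col C"
    and ij: "i < dim_row B" "j < dim_col B"
  have "(A + C) $$ (i,j) = (B + C) $$ (i,j)" using h by simp
  moreover have "(A + C) $$ (i,j) = A $$ (i,j) + C $$ (i,j)" using h(2-5) ij by simp
  moreover have "(B + C) $$ (i,j) = B $$ (i,j) + C $$ (i,j)" using h(2-5) ij by simp
  ultimately show "A $$ (i,j) = B $$ (i,j)" by simp
qed (auto)

lemma add_zero_r: "dim_row A = r \<Longrightarrow> dim_col A = c \<Longrightarrow> A + 0\<^sub>m r c = (A :: complex mat)"
  by (rule eq_matI) auto

lemma mult_zero_r: "dim_col A = r \<Longrightarrow> A * 0\<^sub>m r c = 0\<^sub>m (dim_row A) (c::nat)" 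
  by (rule eq_matI) (auto simp: scalar_prod_def)

lemma mult_zero_l: "dim_row B = c \<Longrightarrow> 0\<^sub>m r c * B = 0\<^sub>m r (dim_col B)" 
  by (rule eq_matI) (auto simp: scalar_prod_def)

lemmas mnorm = massoc mdistl mdistr msmultl msmultr ssmult onesmult sadd addA addC addLC

lemma st_dims: "st = mat_adjoint \<or> st = transpose_mat \<Longrightarrow> dim_row (st A) = dim_col (A::complex mat) \<and> dim_col (st A) = dim_row A"
  by auto

lemma st_mult: "st = mat_adjoint \<or> st = transpose_mat \<Longrightarrow> dim_col (A::complex mat) = dim_row B \<Longrightarrow> st (A * B) = st B * st A"
  by (auto simp: adj_mult intro!: eq_matI simp: scalar_prod_def mult.commute)

lemma st_add: "st = mat_adjoint \<or> st = transpose_mat \<Longrightarrow> dim_row (A::complex mat) = dim_row B \<Longrightarrow> dim_col A = dim_col B \<Longrightarrow> st (A + B) = st A + st B"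
  by (auto simp: adj_add intro!: eq_matI)

lemma st_smult: "st = mat_adjoint \<or> st = transpose_mat \<Longrightarrow> cnj c = c \<Longrightarrow> st (c \<cdot>\<^sub>m (A::complex mat)) = c \<cdot>\<^sub>m st A"
  by (auto simp: adj_smult intro!: eq_matI)

lemma st_st: "st = mat_adjoint \<or> st = transpose_mat \<Longrightarrow> st (st (A::complex mat)) = A"
  by (auto simp: adj_adj)

lemma st_zero: "st = mat_adjoint \<or> st = transpose_mat \<Longrightarrow> st (0\<^sub>m r c :: complex mat) = 0\<^sub>m c r"
  by (auto intro!: eq_matI)

lemma st_one: "st = mat_adjoint \<or> st = transpose_mat \<Longrightarrow> st (1\<^sub>m r :: complex mat) = 1\<^sub>m r"
  by (auto simp: adj_one)


lemma mult_one_r: "dim_col A = n \<Longrightarrow> A * 1\<^sub>m n = (A :: complex mat)"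
  by (rule eq_matI) auto

lemma mult_one_l: "dim_row A = n \<Longrightarrow> 1\<^sub>m n * A = (A :: complex mat)"
  by (rule eq_matI) auto

lemma inv_sylv_eq:
  fixes st :: "complex mat \<Rightarrow> complex mat" and e1 e2 :: complex
    and M D K Xc Lc X L :: "complex mat"
  assumes ST: "st = mat_adjoint \<or> st = transpose_mat"
    and e1: "e1 = 1 \<or> e1 = -1" and e2: "e2 = 1 \<or> e2 = -1"
    and dims: "M \<in> carrier_mat n n" "D \<in> carrier_mat n n" "K \<in> carrier_mat n n"
      "Xc \<in> carrier_mat n p" "Lc \<in> carrier_mat p p" "X \<in> carrier_mat n q" "L \<in> carrier_mat q q"
    and symM: "st M = e1 \<cdot>\<^sub>m M" and symD: "st D = e2 \<cdot>\<^sub>m D" and symK: "st K = e1 \<cdot>\<^sub>m K"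
    and invc: "invariant_pair M D K Xc Lc" and inv: "invariant_pair M D K X L"
  shows "(st Xc * M * X * L + (e1 * e2) \<cdot>\<^sub>m (st Lc * st Xc * M * X) + st Xc * D * X) * L
     = (e1 * e2) \<cdot>\<^sub>m (st Lc * (st Xc * M * X * L + (e1 * e2) \<cdot>\<^sub>m (st Lc * st Xc * M * X) + st Xc * D * X))"
proof -
  have dd: "dim_row M = n" "dim_col M = n" "dim_row D = n" "dim_col D = n" "dim_row K = n" "dim_col K = n"
    "dim_row Xc = n" "dim_col Xc = p" "dim_row Lc = p" "dim_col Lc = p" "dim_row X = n" "dim_col X = q"
    "dim_row L = q" "dim_col L = q" using dims by auto
  have sd: "\<And>A. dim_row (st A) = dim_col A" "\<And>A. dim_col (st A) = dim_row A" using st_dims[OF ST] by auto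
  have sc: "e1 * e1 = 1" "e2 * e2 = 1" "\<And>x. e1 * (e1 * x) = x" "\<And>x. e2 * (e2 * x) = x"
    "cnj e1 = e1" "cnj e2 = e2" using e1 e2 by auto
  have stm: "\<And>A B. dim_col A = dim_row B \<Longrightarrow> st (A * B) = st B * st A" using st_mult[OF ST] by auto
  have sta: "\<And>A B. dim_row A = dim_row B \<Longrightarrow> dim_col A = dim_col B \<Longrightarrow> st (A + B) = st A + st B"
    using st_add[OF ST] by auto
  have E2: "st Xc * (M * X * (L * L) + D * X * L + K * X) = 0\<^sub>m p q"
    using inv dd sd unfolding invariant_pair_def quad_eval_def by (simp add: mult_zero_r)
  have E1: "e1 \<cdot>\<^sub>m (st (M * Xc * (Lc * Lc) + D * Xc * Lc + K * Xc) * X) = 0\<^sub>m p q"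
    using invc dd sd unfolding invariant_pair_def quad_eval_def by (simp add: st_zero[OF ST] mult_zero_l)
  define W where "W = st Xc * M * X * L + (e1 * e2) \<cdot>\<^sub>m (st Lc * st Xc * M * X) + st Xc * D * X"
  have 1: "W * L + st Xc * K * X = (e1 * e2) \<cdot>\<^sub>m (st Lc * st Xc * M * X * L) + st Xc * (M * X * (L * L) + D * X * L + K * X)"
    unfolding W_def using dd sd by (simp add: mnorm)
  have 2: "(e1 * e2) \<cdot>\<^sub>m (st Lc * W) + st Xc * K * X = (e1 * e2) \<cdot>\<^sub>m (st Lc * st Xc * M * X * L) + e1 \<cdot>\<^sub>m (st (M * Xc * (Lc * Lc) + D * Xc * Lc + K * Xc) * X)"
    unfolding W_def using dd sd sc by (simp add: mnorm stm sta symM symD symK st_smult[OF ST] mult_ac)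
  have "W * L + st Xc * K * X = (e1 * e2) \<cdot>\<^sub>m (st Lc * W) + st Xc * K * X"
    unfolding 1 2 E1 E2 by simp
  then have "W * L = (e1 * e2) \<cdot>\<^sub>m (st Lc * W)"
    by (rule add_rcancel) (simp_all add: W_def dd sd)
  then show ?thesis unfolding W_def .
qed

lemma main_thm:
  fixes KK :: "complex set"
    and st :: "complex mat \<Rightarrow> complex mat"
    and e1 e2 :: complex
    and n p1 p2 :: nat
    and M D K Xc Lc Xf Lf La :: "complex mat"
  assumes KK: "KK = \<real> \<or> KK = UNIV"
    and ST: "st = mat_adjoint \<or> st = transpose_mat"
    and e1: "e1 = 1 \<or> e1 = -1"
    and e2: "e2 = 1 \<or> e2 = -1"
    and dims: "M \<in> carrier_mat n n" "D \<in> carrier_mat n n" "K \<in> carrier_mat n n"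
      "Xc \<in> carrier_mat n p1" "Lc \<in> carrier_mat p1 p1"
      "Xf \<in> carrier_mat n p2" "Lf \<in> carrier_mat p2 p2"
      "La \<in> carrier_mat p1 p1"
    and over: "mat_over KK M" "mat_over KK D" "mat_over KK K"
      "mat_over KK Xc" "mat_over KK Lc" "mat_over KK Xf" "mat_over KK Lf" "mat_over KK La"
    and symM: "st M = e1 \<cdot>\<^sub>m M"
    and symD: "st D = e2 \<cdot>\<^sub>m D"
    and symK: "st K = e1 \<cdot>\<^sub>m K"
    and invc: "invariant_pair M D K Xc Lc"
    and invf: "invariant_pair M D K Xf Lf"
    and spec: "spectrum Lc \<inter> spectrum ((e1 * e2) \<cdot>\<^sub>m st Lf) = {}"
    and Rinv: "invertible_mat (st Xc * M * Xc * La + (e1 * e2) \<cdot>\<^sub>m (st Lc * st Xc * M * Xc) + st Xc * D * Xc)"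
  shows
    "let S = st Xc * M * Xc * Lc + (e1 * e2) \<cdot>\<^sub>m (st Lc * st Xc * M * Xc) + st Xc * D * Xc;
         R = st Xc * M * Xc * La + (e1 * e2) \<cdot>\<^sub>m (st Lc * st Xc * M * Xc) + st Xc * D * Xc;
         Z = (Lc - La) * the (mat_inverse R);
         dM = M * Xc * Z * st Xc * M;
         dD = (e1 * e2) \<cdot>\<^sub>m (M * Xc * Z * st Lc * st Xc * M) + M * Xc * Z * st Xc * D
              + M * Xc * Lc * Z * st Xc * M + D * Xc * Z * st Xc * M;
         dK = (e1 * e2) \<cdot>\<^sub>m (M * Xc * Lc * Z * st Lc * st Xc * M) + M * Xc * Lc * Z * st Xc * D
              + (e1 * e2) \<cdot>\<^sub>m (D * Xc * Z * st Lc * st Xc * M) + D * Xc * Z * st Xc * D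
     in invariant_pair (M + dM) (D + dD) (K + dK) Xc La
        \<and> invariant_pair (M + dM) (D + dD) (K + dK) Xf Lf
        \<and> (S * La = e1 \<cdot>\<^sub>m st (S * La) \<longrightarrow>
             st (M + dM) = e1 \<cdot>\<^sub>m (M + dM)
           \<and> st (D + dD) = e2 \<cdot>\<^sub>m (D + dD)
           \<and> st (K + dK) = e1 \<cdot>\<^sub>m (K + dK))"
proof -
  have dd: "dim_row M = n" "dim_col M = n" "dim_row D = n" "dim_col D = n" "dim_row K = n" "dim_col K = n"
    "dim_row Xc = n" "dim_col Xc = p1" "dim_row Lc = p1" "dim_col Lc = p1" "dim_row Xf = n" "dim_col Xf = p2"
    "dim_row Lf = p2" "dim_col Lf = p2" "dim_row La = p1" "dim_col La = p1" using dims by auto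
  have sd: "\<And>A. dim_row (st A) = dim_col A" "\<And>A. dim_col (st A) = dim_row A" using st_dims[OF ST] by auto
  have sc: "e1 * e1 = 1" "e2 * e2 = 1" "\<And>x. e1 * (e1 * x) = x" "\<And>x. e2 * (e2 * x) = x"
    "cnj e1 = e1" "cnj e2 = e2" using e1 e2 by auto
  have stm: "\<And>A B. dim_col A = dim_row B \<Longrightarrow> st (A * B) = st B * st A" using st_mult[OF ST] by auto
  have sta: "\<And>A B. dim_row A = dim_row B \<Longrightarrow> dim_col A = dim_col B \<Longrightarrow> st (A + B) = st A + st B"
    using st_add[OF ST] by auto
  have sts: "\<And>c A. cnj c = c \<Longrightarrow> st (c \<cdot>\<^sub>m A) = c \<cdot>\<^sub>m st A" using st_smult[OF ST] by auto
  have stst: "\<And>A. st (st A) = A" using st_st[OF ST] by auto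
  define S where "S = st Xc * M * Xc * Lc + (e1 * e2) \<cdot>\<^sub>m (st Lc * st Xc * M * Xc) + st Xc * D * Xc"
  define R where "R = st Xc * M * Xc * La + (e1 * e2) \<cdot>\<^sub>m (st Lc * st Xc * M * Xc) + st Xc * D * Xc"
  define Z where "Z = (Lc - La) * the (mat_inverse R)"
  define dM where "dM = M * Xc * Z * st Xc * M"
  define dD where "dD = (e1 * e2) \<cdot>\<^sub>m (M * Xc * Z * st Lc * st Xc * M) + M * Xc * Z * st Xc * D
              + M * Xc * Lc * Z * st Xc * M + D * Xc * Z * st Xc * M"
  define dK where "dK = (e1 * e2) \<cdot>\<^sub>m (M * Xc * Lc * Z * st Lc * st Xc * M) + M * Xc * Lc * Z * st Xc * D
              + (e1 * e2) \<cdot>\<^sub>m (D * Xc * Z * st Lc * st Xc * M) + D * Xc * Z * st Xc * D"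
  define Dl where "Dl = Lc - La"
  have Rc: "R \<in> carrier_mat p1 p1" unfolding R_def using dd sd by (intro carrier_matI) simp_all
  obtain Ri where Ri: "mat_inverse R = Some Ri" 
  proof (cases "mat_inverse R")
    case None
    from Rinv[folded R_def] obtain B where B: "R * B = 1\<^sub>m (dim_row R)" "B * R = 1\<^sub>m (dim_row B)"
      unfolding invertible_mat_def inverts_mat_def by auto
    have "dim_col (R * B) = p1" "dim_col (B * R) = dim_row B" using B Rc by auto
    then have Bc: "B \<in> carrier_mat p1 p1" using Rc by auto
    have "R \<in> Units (ring_mat TYPE(complex) p1 ())"
      unfolding Units_def ring_mat_simps using Rc Bc B by auto
    with mat_inverse(1)[OF Rc None, of "()"] show ?thesis by auto
  qed
  from mat_inverse(2)[OF Rc Ri] have RRi: "R * Ri = 1\<^sub>m p1" "Ri * R = 1\<^sub>m p1" "Ri \<in> carrier_mat p1 p1" by auto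
  have Zd: "Z = Dl * Ri" unfolding Z_def Dl_def Ri by simp
  have Dld: "dim_row Dl = p1" "dim_col Dl = p1" "dim_row Ri = p1" "dim_col Ri = p1" "dim_row R = p1" "dim_col R = p1"
    using RRi(3) Rc unfolding Dl_def by (simp_all add: dd)
  have Zdd: "dim_row Z = p1" "dim_col Z = p1" using Dld by (auto simp: Zd)
  have Lc_eq: "Lc = La + Dl" unfolding Dl_def using dd by (intro eq_matI) auto
  define W where "W = st Xc * M * Xf * Lf + (e1 * e2) \<cdot>\<^sub>m (st Lc * st Xc * M * Xf) + st Xc * D * Xf"
  have Wd: "dim_row W = p1" "dim_col W = p2" unfolding W_def using dd sd by simp_all
  have WL: "W * Lf = (e1 * e2) \<cdot>\<^sub>m (st Lc * W)"
    unfolding W_def by (rule inv_sylv_eq[OF ST e1 e2 dims(1-6) dims(7) symM symD symK invc invf])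
  have "st (W * Lf) = st ((e1 * e2) \<cdot>\<^sub>m (st Lc * W))" using WL by simp
  then have "st Lf * st W = (e1 * e2) \<cdot>\<^sub>m (st W * Lc)"
    using dd Wd sd sc by (simp add: stm sts stst)
  then have "(e1 * e2) \<cdot>\<^sub>m st Lf * st W = st W * Lc"
    using dd Wd sd sc by (simp add: mnorm mult_ac sc)
  then have "st W = 0\<^sub>m p2 p1"
    by (intro sylvester_zero[where A = "(e1 * e2) \<cdot>\<^sub>m st Lf" and B = Lc and p = p2 and q = p1])
      (use dd Wd sd spec in \<open>auto intro!: carrier_matI\<close>)
  then have W0: "W = 0\<^sub>m p1 p2" using stst[of W] st_zero[OF ST] by metis
  have invf': "invariant_pair (M + dM) (D + dD) (K + dK) Xf Lf"
  proof -
    have "quad_eval (M + dM) (D + dD) (K + dK) Xf Lf = quad_eval M D K Xf Lf + (M * Xc * Z * (W * Lf) + (M * Xc * Lc + D * Xc) * Z * W)"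
      unfolding quad_eval_def dM_def dD_def dK_def W_def using dd sd Zdd by (simp add: mnorm)
    also have "\<dots> = 0\<^sub>m n p2" using invf unfolding W0 invariant_pair_def
      using dd sd Zdd by (simp add: mult_zero_r mult_zero_l add_zero_r)
    finally show ?thesis unfolding invariant_pair_def using dd by simp
  qed
  have ZR: "Z * R = Dl" unfolding Zd using Dld RRi by (simp add: massoc)
  have invc': "invariant_pair (M + dM) (D + dD) (K + dK) Xc La"
  proof -
    have "quad_eval (M + dM) (D + dD) (K + dK) Xc La = quad_eval M D K Xc La + (M * Xc * (Z * R) * La + (M * Xc * Lc + D * Xc) * (Z * R))"
      unfolding quad_eval_def dM_def dD_def dK_def R_def using dd sd Zdd by (simp add: mnorm)
    also have "\<dots> = quad_eval M D K Xc La + (M * Xc * Dl * La + (M * Xc * (La + Dl) + D * Xc) * Dl)"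
      unfolding ZR by (subst Lc_eq) (rule refl)
    also have "\<dots> = quad_eval M D K Xc (La + Dl)"
      unfolding quad_eval_def using dd Dld by (simp add: mnorm)
    also have "\<dots> = 0\<^sub>m n p1" using invc unfolding Lc_eq[symmetric] invariant_pair_def using dd by simp
    finally show ?thesis unfolding invariant_pair_def using dd by simp
  qed
  have symZ: "st Z = e1 \<cdot>\<^sub>m Z" if hyp: "S * La = e1 \<cdot>\<^sub>m st (S * La)"
  proof -
    define G where "G = st Xc * M * Xc"
    have Gd: "dim_row G = p1" "dim_col G = p1" unfolding G_def using dd sd by simp_all
    have Sd: "dim_row S = p1" "dim_col S = p1" unfolding S_def using dd sd by simp_all
    have SLc: "S * Lc = (e1 * e2) \<cdot>\<^sub>m (st Lc * S)"
      unfolding S_def by (rule inv_sylv_eq[OF ST e1 e2 dims(1-5) dims(4) dims(5) symM symD symK invc invc])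
    have stS: "st S = e2 \<cdot>\<^sub>m S"
      unfolding S_def using dd sd sc by (simp add: mnorm stm sta sts stst symM symD mult_ac sc)
    have SLa: "S * La = (e1 * e2) \<cdot>\<^sub>m (st La * S)"
      using hyp dd sd sc Sd by (simp add: stm stS mnorm mult_ac sc)
    have "S * La + S * Dl = (e1 * e2) \<cdot>\<^sub>m (st La * S) + (e1 * e2) \<cdot>\<^sub>m (st Dl * S)"
      using SLc[unfolded Lc_eq] dd sd Dld Sd by (simp add: mnorm sta)
    then have "S * Dl + (e1 * e2) \<cdot>\<^sub>m (st La * S) = (e1 * e2) \<cdot>\<^sub>m (st Dl * S) + (e1 * e2) \<cdot>\<^sub>m (st La * S)"
      unfolding SLa using dd sd Dld Sd by (simp add: addC)
    then have SDl: "S * Dl = (e1 * e2) \<cdot>\<^sub>m (st Dl * S)"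
      by (rule add_rcancel) (use dd sd Dld Sd in simp_all)
    have GLc: "st Xc * (M * (Xc * Lc)) = st Xc * (M * (Xc * La)) + st Xc * (M * (Xc * Dl))"
      by (subst Lc_eq) (use dd sd Dld in \<open>simp add: mnorm\<close>)
    have S_eq: "S = R + G * Dl"
      unfolding S_def R_def G_def using dd sd Dld by (simp add: mnorm GLc)
    have stG: "st G = e1 \<cdot>\<^sub>m G" unfolding G_def using dd sd sc by (simp add: mnorm stm stst symM)
    have K3: "e2 \<cdot>\<^sub>m S = st R + e1 \<cdot>\<^sub>m (st Dl * G)"
    proof -
      have "st S = st R + e1 \<cdot>\<^sub>m (st Dl * G)"
        by (subst S_eq) (use dd sd Dld Gd in \<open>simp add: mnorm stm sta stG\<close>)
      then show ?thesis using stS by simp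
    qed
    have K1: "st Dl * R + st Dl * G * Dl = st Dl * S"
      unfolding S_eq using dd sd Dld Gd by (simp add: mnorm)
    have K2: "st Dl * S = (e1 * e2) \<cdot>\<^sub>m (S * Dl)"
      unfolding SDl using dd sd Dld Sd sc by (simp add: mnorm mult_ac sc)
    have K4: "(e1 * e2) \<cdot>\<^sub>m (S * Dl) = e1 \<cdot>\<^sub>m (st R * Dl) + st Dl * G * Dl"
    proof -
      have "(e1 * e2) \<cdot>\<^sub>m (S * Dl) = e1 \<cdot>\<^sub>m ((e2 \<cdot>\<^sub>m S) * Dl)"
        using dd sd Dld Sd sc by (simp add: mnorm mult_ac sc)
      also have "\<dots> = e1 \<cdot>\<^sub>m (st R * Dl) + st Dl * G * Dl"
        unfolding K3 using dd sd Dld Gd sc by (simp add: mnorm mult_ac sc)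
      finally show ?thesis .
    qed
    have "st Dl * R + st Dl * G * Dl = e1 \<cdot>\<^sub>m (st R * Dl) + st Dl * G * Dl"
      using K1 K2 K4 by simp
    then have key: "st Dl * R = e1 \<cdot>\<^sub>m (st R * Dl)"
      by (rule add_rcancel) (use dd sd Dld Gd in simp_all)
    have RiR: "st Ri * st R = 1\<^sub>m p1"
      using RRi Dld by (simp add: stm[symmetric] st_one[OF ST])
    have "st Z = st Ri * st Dl" unfolding Zd using Dld by (simp add: stm)
    also have "\<dots> = st Ri * (st Dl * (R * Ri))" using RRi Dld sd by (simp add: mult_one_r)
    also have "\<dots> = st Ri * ((st Dl * R) * Ri)" using Dld sd by (simp add: massoc)
    also have "\<dots> = st Ri * ((e1 \<cdot>\<^sub>m (st R * Dl)) * Ri)" unfolding key ..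
    also have "\<dots> = e1 \<cdot>\<^sub>m ((st Ri * st R) * (Dl * Ri))" using Dld sd by (simp add: mnorm)
    also have "\<dots> = e1 \<cdot>\<^sub>m Z" unfolding RiR Zd using Dld by (simp add: mult_one_l)
    finally show ?thesis .
  qed
  define A where "A = M * Xc"
  define B where "B = M * Xc * Lc + D * Xc"
  define U where "U = st Xc * M"
  define V where "V = (e1 * e2) \<cdot>\<^sub>m (st Lc * st Xc * M) + st Xc * D"
  have ABd: "dim_row A = n" "dim_col A = p1" "dim_row B = n" "dim_col B = p1"
    "dim_row U = p1" "dim_col U = n" "dim_row V = p1" "dim_col V = n"
    unfolding A_def B_def U_def V_def using dd sd by simp_all
  have dMe: "dM = A * Z * U" unfolding dM_def A_def U_def using dd sd Zdd by (simp add: mnorm)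
  have dDe: "dD = A * Z * V + B * Z * U" unfolding dD_def A_def B_def U_def V_def using dd sd Zdd by (simp add: mnorm)
  have dKe: "dK = B * Z * V" unfolding dK_def B_def V_def using dd sd Zdd by (simp add: mnorm)
  have stA: "st A = e1 \<cdot>\<^sub>m U" unfolding A_def U_def using dd sd by (simp add: mnorm stm symM)
  have stU: "st U = e1 \<cdot>\<^sub>m A" unfolding A_def U_def using dd sd sc by (simp add: mnorm stm symM stst sc)
  have stB: "st B = e2 \<cdot>\<^sub>m V" unfolding B_def V_def using dd sd sc
    by (simp add: mnorm stm sta symM symD stst mult_ac sc)
  have stV: "st V = e2 \<cdot>\<^sub>m B" unfolding B_def V_def using dd sd sc
    by (simp add: mnorm stm sta sts symM symD stst mult_ac sc)
  have symP: "st (M + dM) = e1 \<cdot>\<^sub>m (M + dM) \<and> st (D + dD) = e2 \<cdot>\<^sub>m (D + dD) \<and> st (K + dK) = e1 \<cdot>\<^sub>m (K + dK)"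
    if hyp: "S * La = e1 \<cdot>\<^sub>m st (S * La)"
  proof -
    note sZ = symZ[OF hyp]
    show ?thesis unfolding dMe dDe dKe using dd sd ABd Zdd
      by (simp add: mnorm stm sta sts sZ stA stU stB stV symM symD symK mult_ac sc)
  qed
  have final: "invariant_pair (M + dM) (D + dD) (K + dK) Xc La
        \<and> invariant_pair (M + dM) (D + dD) (K + dK) Xf Lf
        \<and> (S * La = e1 \<cdot>\<^sub>m st (S * La) \<longrightarrow>
             st (M + dM) = e1 \<cdot>\<^sub>m (M + dM)
           \<and> st (D + dD) = e2 \<cdot>\<^sub>m (D + dD)
           \<and> st (K + dK) = e1 \<cdot>\<^sub>m (K + dK))"
    using invc' invf' symP by blast
  show ?thesis unfolding Let_def R_def[symmetric] S_def[symmetric] Z_def[symmetric]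
      dM_def[symmetric] dD_def[symmetric] dK_def[symmetric]
    by (rule final)
qed

theorem theorem3p6:
  fixes KK :: "complex set"
    and st :: "complex mat \<Rightarrow> complex mat"
    and e1 e2 :: complex
    and n p1 p2 :: nat
    and M D K Xc Lc Xf Lf La :: "complex mat"
  assumes KK: "KK = \<real> \<or> KK = UNIV"
    and st: "st = mat_adjoint \<or> st = transpose_mat"
    and e1: "e1 = 1 \<or> e1 = -1"
    and e2: "e2 = 1 \<or> e2 = -1"
    and dims: "M \<in> carrier_mat n n" "D \<in> carrier_mat n n" "K \<in> carrier_mat n n"
      "Xc \<in> carrier_mat n p1" "Lc \<in> carrier_mat p1 p1"
      "Xf \<in> carrier_mat n p2" "Lf \<in> carrier_mat p2 p2"
      "La \<in> carrier_mat p1 p1"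
    and over: "mat_over KK M" "mat_over KK D" "mat_over KK K"
      "mat_over KK Xc" "mat_over KK Lc" "mat_over KK Xf" "mat_over KK Lf" "mat_over KK La"
    and symM: "st M = e1 \<cdot>\<^sub>m M"
    and symD: "st D = e2 \<cdot>\<^sub>m D"
    and symK: "st K = e1 \<cdot>\<^sub>m K"
    and invc: "invariant_pair M D K Xc Lc"
    and invf: "invariant_pair M D K Xf Lf"
    and spec: "spectrum Lc \<inter> spectrum ((e1 * e2) \<cdot>\<^sub>m st Lf) = {}"
    and Rinv: "invertible_mat (st Xc * M * Xc * La + (e1 * e2) \<cdot>\<^sub>m (st Lc * st Xc * M * Xc) + st Xc * D * Xc)"
  shows
    "let S = st Xc * M * Xc * Lc + (e1 * e2) \<cdot>\<^sub>m (st Lc * st Xc * M * Xc) + st Xc * D * Xc;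
         R = st Xc * M * Xc * La + (e1 * e2) \<cdot>\<^sub>m (st Lc * st Xc * M * Xc) + st Xc * D * Xc;
         Z = (Lc - La) * the (mat_inverse R);
         dM = M * Xc * Z * st Xc * M;
         dD = (e1 * e2) \<cdot>\<^sub>m (M * Xc * Z * st Lc * st Xc * M) + M * Xc * Z * st Xc * D
              + M * Xc * Lc * Z * st Xc * M + D * Xc * Z * st Xc * M;
         dK = (e1 * e2) \<cdot>\<^sub>m (M * Xc * Lc * Z * st Lc * st Xc * M) + M * Xc * Lc * Z * st Xc * D
              + (e1 * e2) \<cdot>\<^sub>m (D * Xc * Z * st Lc * st Xc * M) + D * Xc * Z * st Xc * D
     in invariant_pair (M + dM) (D + dD) (K + dK) Xc La
        \<and> invariant_pair (M + dM) (D + dD) (K + dK) Xf Lf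
        \<and> (S * La = e1 \<cdot>\<^sub>m st (S * La) \<longrightarrow>
             st (M + dM) = e1 \<cdot>\<^sub>m (M + dM)
           \<and> st (D + dD) = e2 \<cdot>\<^sub>m (D + dD)
           \<and> st (K + dK) = e1 \<cdot>\<^sub>m (K + dK))"
    using main_thm[OF assms] .

end
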